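(* A ring $R$ is CSNC if and only if (1) $2\in\mathrm{Nil}(R)$, and (2) for every clean element $a\in R$ there exists an integer $k\ge 0$ such that $a^{2^k}$ is strongly nil-clean.
   Context: All rings are associative with identity $1$. For a ring $R$, $\mathrm{Id}(R)$, $U(R)$, $\mathrm{Nil}(R)$ denote the sets of idempotents, units and nilpotent elements. An element $a\in R$ is clean if $a=e+u$ for some $e\in\mathrm{Id}(R)$, $u\in U(R)$. An element $a$ is strongly nil-clean if $a=e+q$ with $e\in \mathrm{Id}(R)$, $q\in\mathrm{Nil}(R)$ and $eq=qe$. A ring $R$ is called CSNC if every clean element of $R$ is strongly nil-clean. *)

theory Defs
  imports Main
begin

definition idem :: "'a::ring_1 \<Rightarrow> bool" where
  "idem e \<longleftrightarrow> e * e = e"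

definition unit_elem :: "'a::ring_1 \<Rightarrow> bool" where
  "unit_elem u \<longleftrightarrow> (\<exists>v. u * v = 1 \<and> v * u = 1)"

definition nilpotent :: "'a::ring_1 \<Rightarrow> bool" where
  "nilpotent q \<longleftrightarrow> (\<exists>n::nat. q ^ n = 0)"

definition clean :: "'a::ring_1 \<Rightarrow> bool" where
  "clean a \<longleftrightarrow> (\<exists>e u. idem e \<and> unit_elem u \<and> a = e + u)"

definition strongly_nil_clean :: "'a::ring_1 \<Rightarrow> bool" where
  "strongly_nil_clean a \<longleftrightarrow> (\<exists>e q. idem e \<and> nilpotent q \<and> e * q = q * e \<and> a = e + q)"

definition CSNC :: "'a::ring_1 itself \<Rightarrow> bool" where
  "CSNC _ \<longleftrightarrow> (\<forall>a::'a. clean a \<longrightarrow> strongly_nil_clean a)"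

end

theory Submission
  imports Defs
begin

inductive_set polys :: "'a::ring_1 \<Rightarrow> 'a set" for a :: "'a::ring_1" where
  gen: "a \<in> polys a"
| one: "1 \<in> polys a"
| add: "y \<in> polys a \<Longrightarrow> z \<in> polys a \<Longrightarrow> y + z \<in> polys a"
| mul: "y \<in> polys a \<Longrightarrow> z \<in> polys a \<Longrightarrow> y * z \<in> polys a"
| neg: "y \<in> polys a \<Longrightarrow> - y \<in> polys a"

lemma polys_zero: "0 \<in> polys a"
  using polys.add[OF polys.one polys.neg[OF polys.one]] by simp

lemma polys_diff: "y \<in> polys a \<Longrightarrow> z \<in> polys a \<Longrightarrow> y - z \<in> polys a"
  using polys.add[OF _ polys.neg] by (metis diff_conv_add_uminus)

lemma polys_pow: "y \<in> polys a \<Longrightarrow> y ^ n \<in> polys a"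
  by (induct n) (auto intro: polys.intros)

lemma polys_comm_gen: "z \<in> polys a \<Longrightarrow> a * z = z * a"
proof (induct rule: polys.induct)
  case gen show ?case by simp
next
  case one show ?case by simp
next
  case (add y z) thus ?case by (simp only: distrib_left distrib_right)
next
  case (mul y z) thus ?case by (metis mult.assoc)
next
  case (neg y) thus ?case by (simp only: mult_minus_left mult_minus_right)
qed

lemma polys_comm: "y \<in> polys a \<Longrightarrow> z \<in> polys a \<Longrightarrow> y * z = z * y"
proof (induct arbitrary: z rule: polys.induct)
  case gen then show ?case by (rule polys_comm_gen)
next
  case one then show ?case by simp
next
  case (add y1 y2) then show ?case by (simp only: distrib_left distrib_right)
next
  case (mul y1 y2)
  have "y1 * y2 * z = y1 * (z * y2)" using mul(4)[OF mul(5)] by (simp only: mult.assoc)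
  also have "\<dots> = z * (y1 * y2)" using mul(2)[OF mul(5)] by (metis mult.assoc)
  finally show ?case .
next
  case (neg y) then show ?case by (simp only: mult_minus_left mult_minus_right)
qed

lemma mult_power_comm:
  fixes x y :: "'a::ring_1"
  assumes "x * y = y * x"
  shows "(x * y) ^ n = x ^ n * y ^ n"
proof (induct n)
  case 0 then show ?case by simp
next
  case (Suc n)
  have "(x * y) ^ Suc n = x ^ n * y ^ n * (x * y)" by (simp only: power_Suc2 Suc)
  also have "\<dots> = x ^ n * (y ^ n * x) * y" by (simp add: mult.assoc)
  also have "\<dots> = x ^ n * (x * y ^ n) * y"
    using power_commuting_commutes[of y x n] assms by simp
  also have "\<dots> = x ^ Suc n * y ^ Suc n" by (simp only: power_Suc2 mult.assoc)
  finally show ?case .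
qed

lemma nil_mult:
  fixes x y :: "'a::ring_1"
  assumes "x * y = y * x" "nilpotent x"
  shows "nilpotent (x * y)"
proof -
  obtain n where "x ^ n = 0" using assms(2) unfolding nilpotent_def by blast
  then have "(x * y) ^ n = 0" using mult_power_comm[OF assms(1)] by simp
  then show ?thesis unfolding nilpotent_def by blast
qed

lemma nil_add:
  fixes y z :: "'a::ring_1"
  assumes c: "y * z = z * y" and ny: "nilpotent y" and nz: "nilpotent z"
  shows "nilpotent (y + z)"
proof -
  have "\<exists>c. (y + z) ^ k = y ^ k + z * c \<and> c * z = z * c" for k
  proof (induct k)
    case 0 show ?case by (rule exI[of _ 0]) simp
  next
    case (Suc k)
    then obtain c where h: "(y + z) ^ k = y ^ k + z * c" "c * z = z * c" by blast
    have yk: "y ^ k * z = z * y ^ k" using power_commuting_commutes[OF c] .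
    have "(y + z) ^ Suc k = (y ^ k + z * c) * (y + z)" by (simp only: power_Suc2 h)
    also have "\<dots> = y ^ Suc k + z * (y ^ k + c * (y + z))"
      by (simp add: distrib_left distrib_right power_Suc2 yk mult.assoc add.assoc power_commutes)
    finally have e: "(y + z) ^ Suc k = y ^ Suc k + z * (y ^ k + c * (y + z))" .
    have "(y ^ k + c * (y + z)) * z = z * (y ^ k + c * (y + z))"
    proof -
      have "c * (y + z) * z = c * (z * (y + z))"
        by (simp add: distrib_left distrib_right mult.assoc c)
      also have "\<dots> = z * (c * (y + z))" by (metis h(2) mult.assoc)
      finally have "c * (y + z) * z = z * (c * (y + z))" .
      then show ?thesis by (simp add: distrib_left distrib_right yk)
    qed
    then show ?case using e by blast
  qed
  moreover obtain m where m: "y ^ m = 0" using ny unfolding nilpotent_def by blast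
  moreover obtain n where n: "z ^ n = 0" using nz unfolding nilpotent_def by blast
  ultimately obtain c where "(y + z) ^ m = z * c" "c * z = z * c" by (metis add_0)
  then have "(y + z) ^ (m * n) = z ^ n * c ^ n"
    by (simp add: power_mult mult_power_comm)
  then show ?thesis using n unfolding nilpotent_def by auto
qed


lemma polys_two: "(2::'a::ring_1) \<in> polys a"
  using polys.add[OF polys.one polys.one] by (simp add: one_add_one)

lemma lift_step_identity:
  fixes e :: "'a::ring_1"
  defines "f \<equiv> e*e + e*e + e*e - e*e*e - e*e*e"
  shows "f * f - f = (e*e - e) * (e*e - e) * ((e*e - e) + (e*e - e) + (e*e - e) + (e*e - e) - 1 - 1 - 1)"
    and "f - e = (e - e*e) * (e + e - 1)"
  unfolding f_def by (simp_all add: algebra_simps)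


lemma lift:
  fixes a :: "'a::ring_1"
  assumes nx: "nilpotent (a - a * a)"
  shows "strongly_nil_clean a"
proof -
  define x where "x = a - a * a"
  have xP: "x \<in> polys a" unfolding x_def by (intro polys_diff polys.intros)
  have claim: "\<exists>e c d. e \<in> polys a \<and> c \<in> polys a \<and> d \<in> polys a \<and>
      e * e - e = x ^ (k + 1) * d \<and> e - a = x * c" for k
  proof (induct k)
    case 0
    show ?case
      by (rule exI[of _ a], rule exI[of _ 0], rule exI[of _ "-1"])
         (auto simp: x_def polys_zero intro: polys.intros)
  next
    case (Suc k)
    then obtain e c d where P: "e \<in> polys a" "c \<in> polys a" "d \<in> polys a"
      and h1: "e * e - e = x ^ (k + 1) * d" and h2: "e - a = x * c" by blast
    define f where "f = e*e + e*e + e*e - e*e*e - e*e*e"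
    define y where "y = e*e - e"
    define w where "w = y + y + y + y - 1 - 1 - 1"
    have fP: "f \<in> polys a" unfolding f_def using P by (intro polys_diff polys.intros)
    have yP: "y \<in> polys a" unfolding y_def using P by (intro polys_diff polys.intros)
    have wP: "w \<in> polys a" unfolding w_def using yP by (intro polys_diff polys.intros)
    have xkP: "x ^ k \<in> polys a" using xP by (rule polys_pow)
    have "f * f - f = y * y * w"
      unfolding f_def y_def w_def by (rule lift_step_identity(1))
    also have "\<dots> = (x ^ (k + 1) * d) * (x ^ (k + 1) * d) * w" using h1 y_def by simp
    also have "\<dots> = x ^ (k + 2) * (x ^ k * d * d * w)"
    proof -
      have c1: "d * x ^ (k+1) = x ^ (k+1) * d"
        using polys_comm[OF P(3) polys_pow[OF xP, of "k+1"]] by simp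
      have "(x ^ (k + 1) * d) * (x ^ (k + 1) * d) * w = x ^ (k+1) * (d * x ^ (k+1)) * d * w"
        by (simp add: mult.assoc)
      also have "\<dots> = x ^ (k+1) * x ^ (k+1) * d * d * w" by (metis c1 mult.assoc)
      also have "x ^ (k+1) * x ^ (k+1) = x ^ (k + 2) * x ^ k"
        by (simp only: power_add[symmetric]) simp
      finally show ?thesis by (simp add: mult.assoc)
    qed
    finally have g1: "f * f - f = x ^ (Suc k + 1) * (x ^ k * d * d * w)" by simp
    have "f - e = (e - e*e) * (e + e - 1)" unfolding f_def by (rule lift_step_identity(2))
    also have "\<dots> = - (x ^ (k + 1) * d) * (e + e - 1)" using h1 by (metis minus_diff_eq)
    also have "\<dots> = x * (- (x ^ k * d * (e + e - 1)))" by (simp add: mult.assoc)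
    finally have "f - a = x * (c - x ^ k * d * (e + e - 1))"
      using h2 by (simp add: algebra_simps)
    moreover have "c - x ^ k * d * (e + e - 1) \<in> polys a"
      using P xkP by (intro polys_diff polys.intros)
    moreover have "x ^ k * d * d * w \<in> polys a" using P xkP wP by (intro polys.intros)
    ultimately show ?case using fP g1 by blast
  qed
  obtain n where n: "x ^ n = 0" using nx unfolding nilpotent_def x_def by blast
  obtain e c d where P: "e \<in> polys a" "c \<in> polys a" "d \<in> polys a"
    and h1: "e * e - e = x ^ (n + 1) * d" and h2: "e - a = x * c" using claim by blast
  have "x ^ (n + 1) = 0" using n by simp
  then have ide: "idem e" using h1 unfolding idem_def by simp
  define q where "q = x * (- c)"
  have qP: "q \<in> polys a" unfolding q_def using xP P by (intro polys.intros)
  have "nilpotent q" unfolding q_def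
    by (rule nil_mult) (use polys_comm[OF xP polys.neg[OF P(2)]] nx x_def in auto)
  moreover have "e * q = q * e" using polys_comm[OF P(1) qP] .
  moreover have "a = e + q" using h2 unfolding q_def by (simp add: algebra_simps)
  ultimately show ?thesis using ide unfolding strongly_nil_clean_def by blast
qed


lemma snc_nil:
  fixes b :: "'a::ring_1"
  assumes "strongly_nil_clean b"
  shows "nilpotent (b - b * b)"
proof -
  obtain e q where ide: "e * e = e" and nq: "nilpotent q" and c: "e * q = q * e" and b: "b = e + q"
    using assms unfolding strongly_nil_clean_def idem_def by blast
  have "b - b * b = e + q - (e * e + e * q + q * e + q * q)"
    unfolding b by (simp add: algebra_simps)
  also have "\<dots> = q * (1 - e - e - q)"
    using ide c by (simp add: algebra_simps)
  finally have eq: "b - b * b = q * (1 - e - e - q)" .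
  have "q * (1 - e - e - q) = (1 - e - e - q) * q"
    using c by (simp add: algebra_simps)
  then show ?thesis unfolding eq using nil_mult nq by blast
qed

lemma descent_step:
  fixes b :: "'a::ring_1"
  assumes n2: "nilpotent (2::'a)" and nu: "nilpotent (b*b - b*b*(b*b))"
  shows "nilpotent (b - b * b)"
proof -
  define x where "x = b - b * b"
  define u where "u = b*b - b*b*(b*b)"
  define w where "w = b*b - b*b*b"
  have id: "x * x = - u + (w + w)" unfolding x_def u_def w_def by (simp add: algebra_simps)
  have uP: "u \<in> polys b" unfolding u_def by (intro polys_diff polys.intros)
  have wP: "w \<in> polys b" unfolding w_def by (intro polys_diff polys.intros)
  have "nilpotent (u * (-1))" by (rule nil_mult) (use nu u_def in auto)
  then have n1: "nilpotent (- u)" by simp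
  have "nilpotent (2 * w)" by (rule nil_mult) (use n2 in \<open>auto simp: mult_2 mult_2_right\<close>)
  then have n3: "nilpotent (w + w)" by (simp add: mult_2)
  have "(- u) * (w + w) = (w + w) * (- u)"
    using polys_comm[OF polys.neg[OF uP] polys.add[OF wP wP]] .
  then have "nilpotent (x * x)" unfolding id using nil_add n1 n3 by blast
  then obtain n where "(x * x) ^ n = 0" unfolding nilpotent_def by blast
  then have "x ^ (2 * n) = 0" by (simp add: power_mult power2_eq_square)
  then show ?thesis unfolding nilpotent_def x_def by blast
qed

lemma descent:
  fixes a :: "'a::ring_1"
  assumes n2: "nilpotent (2::'a)"
  shows "nilpotent (a ^ (2 ^ k) - a ^ (2 ^ k) * a ^ (2 ^ k)) \<Longrightarrow> nilpotent (a - a * a)"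
proof (induct k)
  case 0 then show ?case by simp
next
  case (Suc k)
  have e: "a ^ (2 ^ Suc k) = a ^ (2 ^ k) * a ^ (2 ^ k)"
    by (simp add: power_add[symmetric] mult_2)
  show ?case
    by (rule Suc.hyps, rule descent_step[OF n2]) (use Suc.prems e in simp)
qed

lemma minus_one_clean: "clean (-1 :: 'a::ring_1)"
proof -
  have "idem (0::'a)" unfolding idem_def by simp
  moreover have "unit_elem (-1::'a)" unfolding unit_elem_def by (rule exI[of _ "-1"]) simp
  ultimately show ?thesis unfolding clean_def by force
qed

lemma two_nil:
  assumes "strongly_nil_clean (-1 :: 'a::ring_1)"
  shows "nilpotent (2::'a)"
proof -
  obtain e q :: 'a where ide: "e * e = e" and nq: "nilpotent q" and b: "-1 = e + q"
    using assms unfolding strongly_nil_clean_def idem_def by blast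
  have e: "e = -1 - q" using b by (simp add: algebra_simps)
  have "(-1 - q) * (-1 - q) = -1 - q" using ide e by simp
  then have h: "1 + q + q + q * q = -1 - q" by (simp add: algebra_simps)
  have "(2::'a) = q * (-1 - 1 - 1 - q)"
  proof -
    have "(2::'a) = (1 + q + q + q*q) - (-1 - q) + (- q - q - q - q*q)"
      by (simp add: algebra_simps)
    also have "\<dots> = - q - q - q - q * q" using h by simp
    also have "\<dots> = q * (-1 - 1 - 1 - q)" by (simp only: right_diff_distrib mult_minus1_right mult_1_right)
    finally show ?thesis .
  qed
  moreover have "q * (-1 - 1 - 1 - q) = (-1 - 1 - 1 - q) * q"
    by (simp only: right_diff_distrib left_diff_distrib mult_minus1_right mult_minus1 mult_1_right mult_1_left)
  ultimately show ?thesis using nil_mult nq by metis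
qed

theorem mainTheorem10:
  shows "CSNC TYPE('a::ring_1) \<longleftrightarrow>
    (nilpotent (2::'a) \<and>
     (\<forall>a::'a. clean a \<longrightarrow> (\<exists>k::nat. strongly_nil_clean (a ^ (2 ^ k)))))"
proof
  assume "CSNC TYPE('a)"
  then have h: "\<And>a::'a. clean a \<Longrightarrow> strongly_nil_clean a" unfolding CSNC_def by blast
  have "nilpotent (2::'a)" using two_nil h minus_one_clean by blast
  moreover have "\<forall>a::'a. clean a \<longrightarrow> (\<exists>k::nat. strongly_nil_clean (a ^ (2 ^ k)))"
    using h by (metis power_0 power_one_right)
  ultimately show "nilpotent (2::'a) \<and> (\<forall>a::'a. clean a \<longrightarrow> (\<exists>k::nat. strongly_nil_clean (a ^ (2 ^ k))))"
    by blast
next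
  assume h: "nilpotent (2::'a) \<and> (\<forall>a::'a. clean a \<longrightarrow> (\<exists>k::nat. strongly_nil_clean (a ^ (2 ^ k))))"
  show "CSNC TYPE('a)" unfolding CSNC_def
  proof (intro allI impI)
    fix a :: 'a assume "clean a"
    then obtain k where "strongly_nil_clean (a ^ (2 ^ k))" using h by blast
    then have "nilpotent (a ^ (2 ^ k) - a ^ (2 ^ k) * a ^ (2 ^ k))" by (rule snc_nil)
    then have "nilpotent (a - a * a)" using descent h by blast
    then show "strongly_nil_clean a" by (rule lift)
  qed
qed

end
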